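(* Assume the step size satisfies $$0<\alpha<\min\Big\{\frac{1+\lambda_{\min}(W)}{L_f},\ \frac{2}{L_f+m_f}\Big\}.$$ Let $\mathbf{x}^\ell\in\mathbb{R}^N$ and let $\mathbf{x}^{\ell+1} = \operatorname{prox}_{\alpha g}(W\mathbf{x}^\ell - \alpha\nabla f(\mathbf{x}^\ell))$ (exact DPGM step). With $\bar{\mathbf{x}}^\ell = \tfrac1N\mathbf{1}\mathbf{1}^\top\mathbf{x}^\ell$, $\bar{\mathbf{x}}^{\ell+1}=\tfrac1N\mathbf{1}\mathbf{1}^\top\mathbf{x}^{\ell+1}$, one has $$\|\bar{\mathbf{x}}^{\ell+1} - \mathbf{x}^*\| \le c\,\|\bar{\mathbf{x}}^\ell - \mathbf{x}^*\| + \alpha L_f\|\mathbf{x}^\ell - \bar{\mathbf{x}}^\ell\| + 2\alpha L_g,$$ where $c := \sqrt{1 - 2\alpha m_f L_f/(m_f+L_f)}\in(0,1)$.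
   Context: $N\ge2$; $W\in\mathbb{R}^{N\times N}$ is a symmetric doubly stochastic matrix (nonnegative entries, rows and columns summing to $1$) compatible with an undirected connected graph, with $\rho(W):=\|W-\tfrac1N\mathbf{1}\mathbf{1}^\top\|\in(0,1)$; $\lambda_{\min}(W)$ is its smallest eigenvalue. Each $f_i:\mathbb{R}\to\mathbb{R}$ is $L_{f_i}$-smooth and $m_{f_i}$-strongly convex, $f(\mathbf{x})=\sum_i f_i(x_i)$, $L_f=\max_i L_{f_i}$, $m_f=\min_i m_{f_i}$. Each $g_i:\mathbb{R}\to\mathbb{R}$ is closed, convex, proper and Lipschitz, $g(\mathbf{x})=\sum_i g_i(x_i)$, and $L_g\ge0$ is a constant such that $g$ is $L_g$-Lipschitz on $\mathbb{R}^N$ (Euclidean norm). $x^*\in\mathbb{R}$ is the unique minimizer of $x\mapsto\sum_{i=1}^N(f_i(x)+g_i(x))$ over $\mathbb{R}$, and $\mathbf{x}^* = x^*\mathbf{1}\in\mathbb{R}^N$ is the solution of $\min\sum_i (f_i(x_i)+g_i(x_i))$ subject to $x_i=x_j$ for all $(i,j)\in\mathcal{E}$. $\operatorname{prox}_{\alpha h}(\mathbf{y}) = \arg\min_{\mathbf{x}}\{h(\mathbf{x}) + \tfrac{1}{2\alpha}\|\mathbf{x}-\mathbf{y}\|^2\}$. *)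

theory Defs
  imports "HOL-Analysis.Analysis"
begin

definition avg_mat :: "real^'n^'n" where
  "avg_mat = (\<chi> i j. 1 / real CARD('n))"

definition prox :: "real \<Rightarrow> (real^'n \<Rightarrow> real) \<Rightarrow> real^'n \<Rightarrow> real^'n" where
  "prox a h y = (SOME x. \<forall>z. h x + (1 / (2 * a)) * (norm (x - y))\<^sup>2
                                \<le> h z + (1 / (2 * a)) * (norm (z - y))\<^sup>2)"

definition lambda_min :: "real^'n^'n \<Rightarrow> real" where
  "lambda_min W = Min {l. \<exists>v. v \<noteq> 0 \<and> W *v v = l *\<^sub>R v}"

definition rho :: "real^'n^'n \<Rightarrow> real" where
  "rho W = onorm (\<lambda>x. (W - avg_mat) *v x)"

end

theory Submission imports Defs begin

lemma prox_exists:
  fixes G :: "'a::euclidean_space \<Rightarrow> real"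
  assumes Lg: "Lg \<ge> 0" and lip: "\<forall>u v. \<bar>G u - G v\<bar> \<le> Lg * norm (u - v)" and a: "a > 0"
  shows "\<exists>x. \<forall>z. G x + (1 / (2 * a)) * (norm (x - y))\<^sup>2 \<le> G z + (1 / (2 * a)) * (norm (z - y))\<^sup>2"
proof -
  define phi where "phi z = G z + (1 / (2 * a)) * (norm (z - y))\<^sup>2" for z
  have "Lg-lipschitz_on UNIV G" unfolding lipschitz_on_def using Lg lip by (simp add: dist_norm)
  hence cG: "continuous_on UNIV G" by (rule lipschitz_on_continuous_on)
  have "continuous_on UNIV phi" unfolding phi_def
    by (intro continuous_intros continuous_on_subset[OF cG]) auto
  hence "continuous_on (cball y (2*a*Lg)) phi" by (rule continuous_on_subset) auto
  moreover have "cball y (2*a*Lg) \<noteq> {}" using Lg a by (simp add: mult_nonneg_nonneg not_less)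
  ultimately obtain x0 where x0: "x0 \<in> cball y (2*a*Lg)" "\<And>z. z \<in> cball y (2*a*Lg) \<Longrightarrow> phi x0 \<le> phi z"
    using continuous_attains_inf[of "cball y (2*a*Lg)" phi] by auto
  have "phi x0 \<le> phi z" for z
  proof (cases "z \<in> cball y (2*a*Lg)")
    case True then show ?thesis using x0 by auto
  next
    case False
    hence d: "norm (z - y) > 2*a*Lg" by (simp add: dist_norm norm_minus_commute)
    have "G y \<le> G z + Lg * norm (z - y)" using lip[rule_format, of y z] by (simp add: norm_minus_commute)
    moreover have "Lg * norm (z - y) \<le> (1 / (2 * a)) * (norm (z - y))\<^sup>2"
    proof -
      have "2*a*(Lg * norm (z - y)) \<le> norm (z-y) * norm (z-y)"
        using mult_right_mono[of "2*a*Lg" "norm (z-y)" "norm(z-y)"] d by (simp add: mult.assoc)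
      thus ?thesis using a by (simp add: field_simps power2_eq_square)
    qed
    ultimately have "phi y \<le> phi z" unfolding phi_def by simp
    moreover have "phi x0 \<le> phi y" using x0(2)[of y] Lg a by simp
    ultimately show ?thesis by simp
  qed
  thus ?thesis unfolding phi_def by blast
qed

lemma prox_close:
  fixes G :: "'a::euclidean_space \<Rightarrow> real"
  assumes Lg: "Lg \<ge> 0" and lip: "\<forall>u v. \<bar>G u - G v\<bar> \<le> Lg * norm (u - v)" and a: "a > 0"
    and min: "\<forall>z. G x + (1 / (2 * a)) * (norm (x - y))\<^sup>2 \<le> G z + (1 / (2 * a)) * (norm (z - y))\<^sup>2"
  shows "norm (x - y) \<le> a * Lg"
proof (rule ccontr)
  assume "\<not> ?thesis"
  hence d: "norm (x - y) > a * Lg" by simp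
  define d where "d = norm (x - y)"
  have dpos: "d > 0" using d Lg a unfolding d_def by (smt (verit) mult_nonneg_nonneg)
  define s where "s = a * Lg / d"
  define z where "z = y + s *\<^sub>R (x - y)"
  have s0: "s \<ge> 0" "s < 1" using d dpos Lg a unfolding s_def d_def by (auto simp: field_simps)
  have zy: "norm (z - y) = a * Lg" unfolding z_def s_def d_def using dpos s0 d_def Lg a by simp
  have zx: "norm (z - x) = d - a * Lg"
  proof -
    have "z - x = (1 - s) *\<^sub>R (y - x)" unfolding z_def by (simp add: algebra_simps)
    hence "norm (z - x) = (1 - s) * d" using s0 by (simp add: d_def norm_minus_commute)
    also have "\<dots> = d - a * Lg" using dpos unfolding s_def by (simp add: field_simps)
    finally show ?thesis .
  qed
  have "G z \<le> G x + Lg * norm (z - x)" using lip[rule_format, of z x] by simp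
  with min[rule_format, of z] zy zx have
    "(1 / (2 * a)) * d\<^sup>2 \<le> Lg * (d - a*Lg) + (1 / (2 * a)) * (a*Lg)\<^sup>2" unfolding d_def by simp
  hence "d\<^sup>2 \<le> 2*a*Lg * (d - a*Lg) + (a*Lg)\<^sup>2" using a by (simp add: field_simps)
  hence "(d - a*Lg)\<^sup>2 \<le> 0" by (simp add: power2_eq_square algebra_simps)
  thus False using d d_def by simp
qed

lemma deriv_bound:
  fixes F :: "real \<Rightarrow> real"
  assumes D: "(F has_real_derivative S) (at x)" and lb: "\<forall>y. F y - F x \<ge> - K * \<bar>y - x\<bar>"
  shows "\<bar>S\<bar> \<le> K"
proof -
  have lim: "((\<lambda>y. (F y - F x) / (y - x)) \<longlongrightarrow> S) (at x)"
    using D by (simp add: has_field_derivative_iff)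
  have r: "((\<lambda>y. (F y - F x) / (y - x)) \<longlongrightarrow> S) (at_right x)"
    using lim by (rule filterlim_mono) (simp_all add: at_le)
  have l: "((\<lambda>y. (F y - F x) / (y - x)) \<longlongrightarrow> S) (at_left x)"
    using lim by (rule filterlim_mono) (simp_all add: at_le)
  have "S \<ge> -K"
  proof (rule tendsto_lowerbound[OF r])
    show "\<forall>\<^sub>F y in at_right x. - K \<le> (F y - F x) / (y - x)"
    proof (intro eventually_at_rightI[of x "x+1"])
      fix y assume "y \<in> {x<..<x+1}"
      hence "y - x > 0" by simp
      moreover have "- K * (y - x) \<le> F y - F x" using lb[rule_format, of y] \<open>y - x > 0\<close> by simp
      ultimately show "- K \<le> (F y - F x) / (y - x)" by (simp add: field_simps)
    qed simp
  qed simp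
  moreover have "S \<le> K"
  proof (rule tendsto_upperbound[OF l])
    show "\<forall>\<^sub>F y in at_left x. (F y - F x) / (y - x) \<le> K"
    proof (intro eventually_at_leftI[of "x - 1"])
      fix y assume "y \<in> {x - 1<..<x}"
      hence "y - x < 0" by simp
      moreover have "- K * (x - y) \<le> F y - F x" using lb[rule_format, of y] \<open>y - x < 0\<close> by simp
      ultimately show "(F y - F x) / (y - x) \<le> K" by (simp add: field_simps)
    qed simp
  qed simp
  ultimately show ?thesis by simp
qed


lemma abs4: "\<bar>(a::real) + b - c - d\<bar> \<le> \<bar>a\<bar> + \<bar>b\<bar> + \<bar>c\<bar> + \<bar>d\<bar>" by arith

lemma norm_const: "norm ((\<chi> i. c)::real^'n) = sqrt (real CARD('n)) * \<bar>c\<bar>"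
  by (simp add: norm_vec_def L2_set_def real_sqrt_mult)

lemma sum_cs: "\<bar>\<Sum>i\<in>UNIV. (v::real^'n) $ i\<bar> \<le> sqrt (real CARD('n)) * norm v"
proof -
  have "(\<Sum>i\<in>UNIV. v $ i) = inner v (\<chi> i. 1)" by (simp add: inner_vec_def)
  hence "\<bar>\<Sum>i\<in>UNIV. v $ i\<bar> \<le> norm v * norm ((\<chi> i. 1)::real^'n)"
    using Cauchy_Schwarz_ineq2 by metis
  thus ?thesis by (simp add: norm_const mult.commute)
qed

lemma sum_abs_cs: "(\<Sum>i\<in>UNIV. \<bar>(v::real^'n) $ i\<bar>) \<le> sqrt (real CARD('n)) * norm v"
proof -
  have "norm ((\<chi> i. \<bar>v $ i\<bar>)::real^'n) = norm v" by (simp add: norm_vec_def)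
  thus ?thesis using sum_cs[of "\<chi> i. \<bar>v $ i\<bar>"] by simp
qed

lemma avg_apply: "avg_mat *v (v::real^'n) = (\<chi> i. (\<Sum>j\<in>UNIV. v $ j) / real CARD('n))"
  by (simp add: avg_mat_def matrix_vector_mult_def sum_divide_distrib)

theorem lemma6:
  fixes W :: "real^'n^'n"
    and E :: "'n \<Rightarrow> 'n \<Rightarrow> bool"
    and f f' g :: "'n \<Rightarrow> real \<Rightarrow> real"
    and Lfi mfi :: "'n \<Rightarrow> real"
    and Lg xstar \<alpha> :: real
    and x x' :: "real^'n"
  assumes N2: "CARD('n) \<ge> 2"
    and E_sym: "\<forall>i j. E i j \<longrightarrow> E j i"
    and E_irrefl: "\<forall>i. \<not> E i i"
    and E_conn: "\<forall>i j. E\<^sup>*\<^sup>* i j"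
    and W_sym: "transpose W = W"
    and W_nonneg: "\<forall>i j. W $ i $ j \<ge> 0"
    and W_rows: "\<forall>i. (\<Sum>j\<in>UNIV. W $ i $ j) = 1"
    and W_cols: "\<forall>j. (\<Sum>i\<in>UNIV. W $ i $ j) = 1"
    and W_graph: "\<forall>i j. i \<noteq> j \<longrightarrow> (W $ i $ j > 0 \<longleftrightarrow> E i j)"
    and rho_pos: "0 < rho W" and rho_lt1: "rho W < 1"
    and f_deriv: "\<forall>i y. (f i has_real_derivative f' i y) (at y)"
    and f_smooth: "\<forall>i y z. \<bar>f' i y - f' i z\<bar> \<le> Lfi i * \<bar>y - z\<bar>"
    and mfi_pos: "\<forall>i. mfi i > 0"
    and f_strong: "\<forall>i y z. f i z \<ge> f i y + f' i y * (z - y) + mfi i / 2 * (z - y)\<^sup>2"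
    and g_convex: "\<forall>i. convex_on UNIV (g i)"
    and g_lip: "\<forall>i. \<exists>K. \<forall>y z. \<bar>g i y - g i z\<bar> \<le> K * \<bar>y - z\<bar>"
    and Lg_nonneg: "Lg \<ge> 0"
    and Lg_lip: "\<forall>y z :: real^'n. \<bar>(\<Sum>i\<in>UNIV. g i (y $ i)) - (\<Sum>i\<in>UNIV. g i (z $ i))\<bar>
                     \<le> Lg * norm (y - z)"
    and xstar_min: "\<forall>y. (\<Sum>i\<in>UNIV. f i xstar + g i xstar) \<le> (\<Sum>i\<in>UNIV. f i y + g i y)"
    and xstar_unique: "\<forall>y. (\<Sum>i\<in>UNIV. f i y + g i y) \<le> (\<Sum>i\<in>UNIV. f i xstar + g i xstar)
                         \<longrightarrow> y = xstar"
    and alpha_pos: "0 < \<alpha>"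
    and alpha_lt: "\<alpha> < min ((1 + lambda_min W) / Max (range Lfi))
                            (2 / (Max (range Lfi) + Min (range mfi)))"
    and step: "x' = prox \<alpha> (\<lambda>y. \<Sum>i\<in>UNIV. g i (y $ i))
                  (W *v x - \<alpha> *\<^sub>R (\<chi> i. f' i (x $ i)))"
  shows "let Lf = Max (range Lfi); mf = Min (range mfi);
             c = sqrt (1 - 2 * \<alpha> * mf * Lf / (mf + Lf));
             xs = (\<chi> i. xstar) :: real^'n
         in 0 < c \<and> c < 1 \<and>
            norm (avg_mat *v x' - xs)
              \<le> c * norm (avg_mat *v x - xs) + \<alpha> * Lf * norm (x - avg_mat *v x) + 2 * \<alpha> * Lg"
proof -
  define Lf where "Lf = Max (range Lfi)"
  define mf where "mf = Min (range mfi)"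
  define NN where "NN = real CARD('n)"
  define sN where "sN = sqrt NN"
  have NNpos: "NN > 0" unfolding NN_def by simp
  have sNpos: "sN > 0" unfolding sN_def using NNpos by simp
  have sN2: "sN * sN = NN" unfolding sN_def using NNpos by simp
  have Lfi_le: "\<And>i. Lfi i \<le> Lf" unfolding Lf_def by simp
  have mf_le: "\<And>i. mf \<le> mfi i" unfolding mf_def by simp
  have mono: "(f' i z - f' i y) * (z - y) \<ge> mfi i * (z - y)\<^sup>2" for i y z
  proof -
    have "f i z \<ge> f i y + f' i y * (z - y) + mfi i / 2 * (z - y)\<^sup>2" using f_strong by blast
    moreover have "f i y \<ge> f i z + f' i z * (y - z) + mfi i / 2 * (y - z)\<^sup>2" using f_strong by blast
    ultimately show ?thesis by (simp add: power2_eq_square algebra_simps)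
  qed
  have mL: "mfi i \<le> Lfi i" for i
  proof -
    have "mfi i \<le> (f' i 1 - f' i 0)" using mono[of i 0 1] by simp
    also have "\<dots> \<le> Lfi i" using f_smooth[rule_format, of i 1 0] by simp
    finally show ?thesis .
  qed
  obtain i0 :: 'n where True by blast
  have mf_pos: "mf > 0"
  proof -
    have "mf \<in> range mfi" unfolding mf_def by (rule Min_in) auto
    thus ?thesis using mfi_pos by auto
  qed
  have mfLf: "mf \<le> Lf" using mf_le[of i0] mL[of i0] Lfi_le[of i0] by simp
  define q where "q = 2*\<alpha>*mf*Lf/(mf+Lf)"
  have al2: "\<alpha> * (mf + Lf) < 2" using alpha_lt mf_pos mfLf
    by (simp add: Lf_def[symmetric] mf_def[symmetric] field_simps)
  have q_pos: "q > 0" unfolding q_def using alpha_pos mf_pos mfLf by simp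
  have q_lt1: "q < 1"
  proof -
    have "2*\<alpha>*mf*Lf < mf + Lf"
    proof -
      have "2*\<alpha>*mf*Lf * (mf + Lf) = (\<alpha> * (mf + Lf)) * (2*mf*Lf)" by (simp add: algebra_simps)
      also have "\<dots> < 2 * (2*mf*Lf)"
        using mult_strict_right_mono[OF al2, of "2*mf*Lf"] mf_pos mfLf by simp
      also have "\<dots> \<le> (mf + Lf) * (mf + Lf)" using zero_le_power2[of "mf - Lf"] by (simp add: power2_eq_square algebra_simps)
      finally show ?thesis using mf_pos mfLf by simp
    qed
    thus ?thesis unfolding q_def using mf_pos mfLf by simp
  qed
  define c where "c = sqrt (1 - q)"
  have c_pos: "0 < c" and c_lt1: "c < 1" unfolding c_def using q_pos q_lt1 by auto
  have c2: "c * c = 1 - q" unfolding c_def using q_lt1 by simp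
  define G where "G v = (\<Sum>i\<in>UNIV. g i (v $ i))" for v :: "real^'n"
  define y where "y = W *v x - \<alpha> *\<^sub>R (\<chi> i. f' i (x $ i))"
  have Glip: "\<forall>u v. \<bar>G u - G v\<bar> \<le> Lg * norm (u - v)" using Lg_lip unfolding G_def by blast
  have ex: "\<exists>x. \<forall>z. G x + (1 / (2 * \<alpha>)) * (norm (x - y))\<^sup>2 \<le> G z + (1 / (2 * \<alpha>)) * (norm (z - y))\<^sup>2"
    by (rule prox_exists[OF Lg_nonneg Glip alpha_pos])
  have x'min: "\<forall>z. G x' + (1 / (2 * \<alpha>)) * (norm (x' - y))\<^sup>2 \<le> G z + (1 / (2 * \<alpha>)) * (norm (z - y))\<^sup>2"
    unfolding step prox_def G_def[abs_def] y_def[symmetric] using someI_ex[OF ex[unfolded G_def]] by blast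
  have x'y: "norm (x' - y) \<le> \<alpha> * Lg" by (rule prox_close[OF Lg_nonneg Glip alpha_pos x'min])
  define mean where "mean v = (\<Sum>i\<in>UNIV. v $ i) / NN" for v :: "real^'n"
  define a where "a = mean x"
  define e where "e = a - xstar"
  define S where "S = (\<Sum>i\<in>UNIV. f' i xstar)"
  define d where "d = (\<Sum>i\<in>UNIV. f' i a - f' i xstar) / NN"
  define R where "R = (\<Sum>i\<in>UNIV. f' i (x $ i) - f' i a)"
  have meanW: "(\<Sum>i\<in>UNIV. (W *v x) $ i) = (\<Sum>i\<in>UNIV. x $ i)"
  proof -
    have "(\<Sum>i\<in>UNIV. (W *v x) $ i) = (\<Sum>i\<in>UNIV. \<Sum>j\<in>UNIV. W $ i $ j * x $ j)"
      by (simp add: matrix_vector_mult_def)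
    also have "\<dots> = (\<Sum>j\<in>UNIV. (\<Sum>i\<in>UNIV. W $ i $ j) * x $ j)"
      by (subst sum.swap) (simp add: sum_distrib_right)
    also have "\<dots> = (\<Sum>j\<in>UNIV. x $ j)" using W_cols by simp
    finally show ?thesis .
  qed
  have meany: "mean y = a - \<alpha> / NN * (\<Sum>i\<in>UNIV. f' i (x $ i))"
    unfolding y_def mean_def a_def using meanW NNpos
    by (simp add: sum_subtractf sum_distrib_left[symmetric] field_simps)
  have split: "mean y - xstar = (e - \<alpha> * d) - \<alpha> / NN * R - \<alpha> / NN * S"
    unfolding meany e_def d_def R_def S_def using NNpos
    by (simp add: sum_subtractf field_simps)
  have T2: "\<bar>e - \<alpha> * d\<bar> \<le> c * \<bar>e\<bar>"
  proof -
    have de: "d * e \<ge> mf * e\<^sup>2"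
    proof -
      have "d * e = (\<Sum>i\<in>UNIV. (f' i a - f' i xstar) * (a - xstar)) / NN"
        unfolding d_def e_def by (simp add: sum_distrib_right)
      moreover have "(\<Sum>i\<in>(UNIV::'n set). mf * e\<^sup>2) \<le> (\<Sum>i\<in>UNIV. (f' i a - f' i xstar) * (a - xstar))"
      proof (rule sum_mono)
        fix i :: 'n
        have "mf * e\<^sup>2 \<le> mfi i * e\<^sup>2" using mf_le[of i] by (simp add: mult_right_mono)
        also have "\<dots> \<le> (f' i a - f' i xstar) * (a - xstar)" using mono[of i a xstar] by (simp add: e_def)
        finally show "mf * e\<^sup>2 \<le> (f' i a - f' i xstar) * (a - xstar)" .
      qed
      ultimately have "NN * (mf * e\<^sup>2) \<le> NN * (d * e)" using NNpos by (simp add: NN_def field_simps)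
      thus ?thesis using NNpos by simp
    qed
    have dabs: "\<bar>d\<bar> \<le> Lf * \<bar>e\<bar>"
    proof -
      have "\<bar>d\<bar> \<le> (\<Sum>i\<in>UNIV. \<bar>f' i a - f' i xstar\<bar>) / NN"
        unfolding d_def using NNpos by (simp add: divide_right_mono sum_abs)
      moreover have "(\<Sum>i\<in>UNIV. \<bar>f' i a - f' i xstar\<bar>) \<le> (\<Sum>i\<in>(UNIV::'n set). Lf * \<bar>e\<bar>)"
      proof (rule sum_mono)
        fix i :: 'n
        have "\<bar>f' i a - f' i xstar\<bar> \<le> Lfi i * \<bar>e\<bar>" using f_smooth by (simp add: e_def)
        also have "\<dots> \<le> Lf * \<bar>e\<bar>" using Lfi_le[of i] by (simp add: mult_right_mono)
        finally show "\<bar>f' i a - f' i xstar\<bar> \<le> Lf * \<bar>e\<bar>" .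
      qed
      ultimately have "\<bar>d\<bar> \<le> (\<Sum>i\<in>(UNIV::'n set). Lf * \<bar>e\<bar>) / NN"
        using NNpos by (meson divide_right_mono order.trans less_imp_le)
      thus ?thesis using NNpos by (simp add: NN_def)
    qed
    have key: "(d - mf * e) * (d - Lf * e) \<le> 0"
    proof (cases "e \<ge> 0")
      case True
      show ?thesis
      proof (cases "e = 0")
        case True thus ?thesis using dabs by simp
      next
        case False
        hence "e > 0" using \<open>e \<ge> 0\<close> by simp
        hence "d \<ge> mf * e" using de by (simp add: power2_eq_square)
        moreover have "d \<le> Lf * e" using dabs \<open>e > 0\<close> by simp
        ultimately show ?thesis by (simp add: mult_nonneg_nonpos)
      qed
    next
      case False
      hence "e < 0" by simp
      hence "d \<le> mf * e" using de by (simp add: power2_eq_square)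
      moreover have "d \<ge> Lf * e" using dabs \<open>e < 0\<close> by simp
      ultimately show ?thesis by (simp add: mult_nonpos_nonneg)
    qed
    have "\<alpha> * d * d * (mf + Lf) \<le> 2 * d * d"
    proof -
      have "(\<alpha> * (mf+Lf)) * (d*d) \<le> 2 * (d*d)"
        using al2 by (intro mult_right_mono) auto
      thus ?thesis by (simp add: algebra_simps)
    qed
    hence "\<alpha> * d * d \<le> 2 * d * d / (mf + Lf)" using mf_pos mfLf by (simp add: field_simps)
    also have "\<dots> \<le> 2 * d * e - 2 * mf * Lf * e * e / (mf + Lf)"
    proof -
      have "2 * d * d \<le> 2 * d * e * (mf + Lf) - 2 * mf * Lf * e * e"
        using key by (simp add: algebra_simps)
      hence "2 * d * d / (mf + Lf) \<le> (2 * d * e * (mf + Lf) - 2 * mf * Lf * e * e) / (mf + Lf)"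
        using mf_pos mfLf by (intro divide_right_mono) auto
      also have "\<dots> = 2 * d * e - 2 * mf * Lf * e * e / (mf + Lf)"
        using mf_pos mfLf by (simp add: field_simps)
      finally show ?thesis .
    qed
    finally have "\<alpha> * (\<alpha> * d * d) \<le> \<alpha> * (2 * d * e - 2 * mf * Lf * e * e / (mf + Lf))"
      using alpha_pos by simp
    moreover have "\<alpha> * (2 * mf * Lf * e * e / (mf + Lf)) = q * (e * e)" unfolding q_def by simp
    ultimately have "\<alpha> * \<alpha> * (d * d) + q * (e * e) \<le> 2 * \<alpha> * d * e"
      by (simp add: algebra_simps)
    moreover have "(c * e)\<^sup>2 = e * e - q * (e * e)"
    proof -
      have "(c * e)\<^sup>2 = (c * c) * (e * e)" by (simp add: power2_eq_square algebra_simps)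
      thus ?thesis using c2 by (simp add: left_diff_distrib)
    qed
    moreover have "(e - \<alpha> * d)\<^sup>2 = e * e + \<alpha> * \<alpha> * (d * d) - 2 * \<alpha> * d * e"
      by (simp add: power2_eq_square algebra_simps)
    ultimately have "(e - \<alpha> * d)\<^sup>2 \<le> (c * e)\<^sup>2" by linarith
    hence "\<bar>e - \<alpha> * d\<bar> \<le> \<bar>c * e\<bar>" by (simp only: abs_le_square_iff)
    thus ?thesis using c_pos by (simp add: abs_mult)
  qed
  have T3: "sN * (\<alpha> / NN * \<bar>R\<bar>) \<le> \<alpha> * Lf * norm (x - avg_mat *v x)"
  proof -
    have avx: "avg_mat *v x = (\<chi> i. a)" unfolding avg_apply a_def mean_def NN_def ..
    have "\<bar>R\<bar> \<le> (\<Sum>i\<in>UNIV. Lf * \<bar>x $ i - a\<bar>)"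
      unfolding R_def
      by (rule order.trans[OF sum_abs sum_mono], rule order.trans[OF f_smooth[rule_format]])
         (auto intro!: mult_right_mono Lfi_le)
    also have "\<dots> = Lf * (\<Sum>i\<in>UNIV. \<bar>(x - avg_mat *v x) $ i\<bar>)"
      by (simp add: avx sum_distrib_left)
    also have "\<dots> \<le> Lf * (sN * norm (x - avg_mat *v x))"
      using sum_abs_cs[of "x - avg_mat *v x"] mf_pos mfLf unfolding sN_def NN_def
      by (intro mult_left_mono) auto
    finally have "\<bar>R\<bar> \<le> Lf * (sN * norm (x - avg_mat *v x))" .
    hence "sN * (\<alpha> / NN * \<bar>R\<bar>) \<le> sN * (\<alpha> / NN * (Lf * (sN * norm (x - avg_mat *v x))))"
      using sNpos alpha_pos NNpos by (intro mult_left_mono) auto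
    also have "\<dots> = \<alpha> * Lf * norm (x - avg_mat *v x)"
      using sN2 NNpos by (simp add: field_simps)
    finally show ?thesis .
  qed
  have T4: "\<bar>S\<bar> \<le> sN * Lg"
  proof -
    define F where "F t = (\<Sum>i\<in>UNIV. f i t)" for t
    have FD: "(F has_real_derivative S) (at xstar)" unfolding F_def S_def
      by (intro DERIV_sum) (use f_deriv in blast)
    have "F t - F xstar \<ge> - (sN * Lg) * \<bar>t - xstar\<bar>" for t
    proof -
      have "(\<Sum>i\<in>UNIV. f i xstar + g i xstar) \<le> (\<Sum>i\<in>UNIV. f i t + g i t)"
        using xstar_min by blast
      hence "F xstar + G (\<chi> i. xstar) \<le> F t + G (\<chi> i. t)"
        unfolding F_def G_def by (simp add: sum.distrib)
      moreover have "\<bar>G (\<chi> i. t) - G (\<chi> i. xstar)\<bar> \<le> Lg * norm ((\<chi> i. t) - (\<chi> i. xstar) :: real^'n)"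
        using Glip by blast
      moreover have "((\<chi> i. t) - (\<chi> i. xstar) :: real^'n) = (\<chi> i. t - xstar)"
        by (simp add: vec_eq_iff)
      ultimately show ?thesis using norm_const[of "t - xstar", where 'n='n]
        unfolding sN_def NN_def by (simp add: algebra_simps)
    qed
    thus ?thesis using deriv_bound[OF FD] by blast
  qed
  have T1: "sN * \<bar>mean x' - mean y\<bar> \<le> \<alpha> * Lg"
  proof -
    have "mean x' - mean y = (\<Sum>i\<in>UNIV. (x' - y) $ i) / NN"
      unfolding mean_def by (simp add: sum_subtractf diff_divide_distrib)
    hence "sN * \<bar>mean x' - mean y\<bar> = sN * \<bar>\<Sum>i\<in>UNIV. (x' - y) $ i\<bar> / NN"
      using NNpos by simp
    also have "\<dots> \<le> sN * (sN * norm (x' - y)) / NN"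
      using sum_cs[of "x' - y"] sNpos NNpos unfolding sN_def NN_def
      by (intro divide_right_mono mult_left_mono) auto
    also have "\<dots> = (sN * sN) * norm (x' - y) / NN" by (simp add: mult.assoc)
    also have "\<dots> = norm (x' - y)" using sN2 NNpos by simp
    finally show ?thesis using x'y by simp
  qed
  have nx': "norm (avg_mat *v x' - (\<chi> i. xstar)) = sN * \<bar>mean x' - xstar\<bar>"
  proof -
    have "avg_mat *v x' - (\<chi> i. xstar) = (\<chi> i. mean x' - xstar)"
      by (simp add: avg_apply mean_def NN_def vec_eq_iff)
    thus ?thesis using norm_const unfolding sN_def NN_def by metis
  qed
  have nx: "norm (avg_mat *v x - (\<chi> i. xstar)) = sN * \<bar>e\<bar>"
  proof -
    have "avg_mat *v x - (\<chi> i. xstar) = (\<chi> i. e)"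
      by (simp add: avg_apply mean_def NN_def vec_eq_iff e_def a_def)
    thus ?thesis using norm_const unfolding sN_def NN_def by metis
  qed
  have "\<bar>mean x' - xstar\<bar> \<le> \<bar>mean x' - mean y\<bar> + \<bar>e - \<alpha> * d\<bar> + \<alpha> / NN * \<bar>R\<bar> + \<alpha> / NN * \<bar>S\<bar>"
  proof -
    have ab: "\<bar>\<alpha> / NN * R\<bar> = \<alpha> / NN * \<bar>R\<bar>" "\<bar>\<alpha> / NN * S\<bar> = \<alpha> / NN * \<bar>S\<bar>"
      using alpha_pos NNpos by (simp_all add: abs_mult)
    have eq: "mean x' - xstar = (mean x' - mean y) + (e - \<alpha> * d) - \<alpha> / NN * R - \<alpha> / NN * S"
      using split by simp
    show ?thesis unfolding eq using abs4[of "mean x' - mean y" "e - \<alpha> * d" "\<alpha> / NN * R" "\<alpha> / NN * S"] ab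
      by (simp only:)
  qed
  hence "sN * \<bar>mean x' - xstar\<bar> \<le> sN * \<bar>mean x' - mean y\<bar> + sN * \<bar>e - \<alpha> * d\<bar> + sN * (\<alpha> / NN * \<bar>R\<bar>) + sN * (\<alpha> / NN * \<bar>S\<bar>)"
  proof -
    assume h: "\<bar>mean x' - xstar\<bar> \<le> \<bar>mean x' - mean y\<bar> + \<bar>e - \<alpha> * d\<bar> + \<alpha> / NN * \<bar>R\<bar> + \<alpha> / NN * \<bar>S\<bar>"
    show ?thesis using mult_left_mono[OF h less_imp_le[OF sNpos]] by (simp only: distrib_left)
  qed
  moreover have "sN * \<bar>e - \<alpha> * d\<bar> \<le> c * (sN * \<bar>e\<bar>)" using T2 sNpos by simp
  moreover have "sN * (\<alpha> / NN * \<bar>S\<bar>) \<le> \<alpha> * Lg"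
  proof -
    have "sN * (\<alpha> / NN * \<bar>S\<bar>) \<le> sN * (\<alpha> / NN * (sN * Lg))"
      using T4 sNpos alpha_pos NNpos by (intro mult_left_mono) auto
    also have "\<dots> = \<alpha> * Lg" using sN2 NNpos by (simp add: field_simps)
    finally show ?thesis .
  qed
  ultimately have main: "norm (avg_mat *v x' - (\<chi> i. xstar)) \<le>
      c * norm (avg_mat *v x - (\<chi> i. xstar)) + \<alpha> * Lf * norm (x - avg_mat *v x) + 2 * \<alpha> * Lg"
    unfolding nx nx' using T1 T3 by linarith
  show ?thesis
    unfolding Let_def Lf_def[symmetric] mf_def[symmetric] q_def[symmetric]
    using main c_pos c_lt1 unfolding c_def q_def by simp
qed

end
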